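(* For $0\le i,j\le n-1$, $n\in\mathbb{N}$ and $a,q>0$, $$\frac{Z^{\mathrm{col}}(i,j,a,q,n)}{Z^{\mathrm{col}}_n(a,q)}=\frac{1}{(2\pi\mathrm{i})^2}\int_{\Gamma_0}\int_{\Gamma_0}q^{(i+1)^2+j}\frac{G^{\mathrm{diag}}_{NE}(w,b,a,q)}{w^ib^j}\frac{dw}{w}\frac{db}{b},$$ where $\Gamma_0$ is a contour around the origin.
   Context: $\mathrm{i}=\sqrt{-1}$. Aztec diamond of size $n$: white vertices $\{(x_1,x_2): x_1\text{ odd},\ x_2\text{ even},\ 1\le x_1\le 2n-1,\ 0\le x_2\le 2n\}$, black vertices $\{(x_1,x_2): x_1\text{ even},\ x_2\text{ odd},\ 0\le x_1\le 2n,\ 1\le x_2\le 2n-1\}$, $e_1=(1,1)$, $e_2=(-1,1)$. The $q^{\mathrm{col}}$ weighting: for a black vertex $x=(x_1,x_2)$, the edges to $x\pm e_1$ have weight $1$, the edge to $x+e_2$ has weight $aq^{-2n+x_1-1}$ and the edge to $x-e_2$ has weight $aq^{2n-x_1}$. $Z^{\mathrm{col}}_n(a,q)$ is the sum over perfect matchings of products of weights, and $Z^{\mathrm{col}}(i,j,a,q,n)$ the same for the graph with vertices $(2n-2i-1,2n)$ and $(2n,2n-1-2j)$ removed. The $q^{\mathrm{diag}}$ weighting (with $b=1$): for $0\le k,l\le n-1$, edges $\{(2n-2k-2,2n-2l-1),(2n-2k-1,2n-2l)\}$ and $\{(2n-2k-1,2n-2l-2),(2n-2k,2n-2l-1)\}$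 have weight $1$, edge $\{(2n-2k-1,2n-2l),(2n-2k,2n-2l-1)\}$ has weight $aq^{-2\min(k,l)}$, and edge $\{(2n-2k-2,2n-2l-1),(2n-2k-1,2n-2l-2)\}$ has weight $aq^{2\min(k,l)+1}$; $Z^{\mathrm{diag}}_n(1,a,q)$ and $Z^{\mathrm{diag}}(i,j,a,q,n)$ are the corresponding partition functions (the latter with $(2n-2i-1,2n)$, $(2n,2n-2j-1)$ removed), and $G^{\mathrm{diag}}_{NE}(w,b,a,q)=\sum_{i,j=0}^{n-1}\frac{Z^{\mathrm{diag}}(i,j,a,q,n)}{Z^{\mathrm{diag}}_n(1,a,q)}w^ib^j$. *)

theory Defs
  imports "HOL-Analysis.Analysis" "HOL-Complex_Analysis.Complex_Analysis"
begin

type_synonym vtx = "int \<times> int"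

definition e1 :: vtx where "e1 = (1, 1)"
definition e2 :: vtx where "e2 = (-1, 1)"

definition vadd :: "vtx \<Rightarrow> vtx \<Rightarrow> vtx" where
  "vadd x y = (fst x + fst y, snd x + snd y)"
definition vsub :: "vtx \<Rightarrow> vtx \<Rightarrow> vtx" where
  "vsub x y = (fst x - fst y, snd x - snd y)"

text \<open>White and black vertices of the Aztec diamond of size n.\<close>
definition white_vtx :: "nat \<Rightarrow> vtx set" where
  "white_vtx n = {(x1, x2). odd x1 \<and> even x2 \<and> 1 \<le> x1 \<and> x1 \<le> 2 * int n - 1
                          \<and> 0 \<le> x2 \<and> x2 \<le> 2 * int n}"
definition black_vtx :: "nat \<Rightarrow> vtx set" where
  "black_vtx n = {(x1, x2). even x1 \<and> odd x2 \<and> 0 \<le> x1 \<and> x1 \<le> 2 * int n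
                          \<and> 1 \<le> x2 \<and> x2 \<le> 2 * int n - 1}"

definition adj :: "vtx \<Rightarrow> vtx \<Rightarrow> bool" where
  "adj x y \<longleftrightarrow> y = vadd x e1 \<or> y = vsub x e1 \<or> y = vadd x e2 \<or> y = vsub x e2"

definition perfect_matchings :: "vtx set \<Rightarrow> vtx set \<Rightarrow> (vtx \<times> vtx) set set" where
  "perfect_matchings Bv Wv = {M. M \<subseteq> Bv \<times> Wv \<and> (\<forall>(x, y) \<in> M. adj x y)
      \<and> (\<forall>x\<in>Bv. \<exists>!y. (x, y) \<in> M) \<and> (\<forall>y\<in>Wv. \<exists>!x. (x, y) \<in> M)}"

definition part_fun :: "vtx set \<Rightarrow> vtx set \<Rightarrow> (vtx \<Rightarrow> vtx \<Rightarrow> real) \<Rightarrow> real" where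
  "part_fun Bv Wv wt = (\<Sum>M\<in>perfect_matchings Bv Wv. \<Prod>(x, y)\<in>M. wt x y)"

definition wt_col :: "nat \<Rightarrow> real \<Rightarrow> real \<Rightarrow> vtx \<Rightarrow> vtx \<Rightarrow> real" where
  "wt_col n a q x y =
     (if y = vadd x e1 \<or> y = vsub x e1 then 1
      else if y = vadd x e2 then a * q powi (- 2 * int n + fst x - 1)
      else if y = vsub x e2 then a * q powi (2 * int n - fst x)
      else 0)"

text \<open>q^diag weighting with b = 1. For a black vertex x = (x1,x2) the indices are
  l = (2n-1-x2)/2 and k = (2n-2-x1)/2 for the edges to x+e1, x-e2
  (black vertex (2n-2k-2, 2n-2l-1)), resp. k = (2n-x1)/2 for the edges to x-e1, x+e2
  (black vertex (2n-2k, 2n-2l-1)).\<close>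
definition wt_diag :: "nat \<Rightarrow> real \<Rightarrow> real \<Rightarrow> vtx \<Rightarrow> vtx \<Rightarrow> real" where
  "wt_diag n a q x y =
     (let l = (2 * int n - 1 - snd x) div 2 in
      if y = vadd x e1 \<or> y = vsub x e1 then 1
      else if y = vadd x e2 then
        (let k = (2 * int n - fst x) div 2 in a * q powi (- 2 * min k l))
      else if y = vsub x e2 then
        (let k = (2 * int n - 2 - fst x) div 2 in a * q powi (2 * min k l + 1))
      else 0)"

definition Z_col :: "nat \<Rightarrow> real \<Rightarrow> real \<Rightarrow> real" where
  "Z_col n a q = part_fun (black_vtx n) (white_vtx n) (wt_col n a q)"

definition Z_col_rm :: "nat \<Rightarrow> nat \<Rightarrow> real \<Rightarrow> real \<Rightarrow> nat \<Rightarrow> real" where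
  "Z_col_rm i j a q n =
     part_fun (black_vtx n - {(2 * int n, 2 * int n - 1 - 2 * int j)})
              (white_vtx n - {(2 * int n - 2 * int i - 1, 2 * int n)}) (wt_col n a q)"

definition Z_diag :: "nat \<Rightarrow> real \<Rightarrow> real \<Rightarrow> real" where
  "Z_diag n a q = part_fun (black_vtx n) (white_vtx n) (wt_diag n a q)"

definition Z_diag_rm :: "nat \<Rightarrow> nat \<Rightarrow> real \<Rightarrow> real \<Rightarrow> nat \<Rightarrow> real" where
  "Z_diag_rm i j a q n =
     part_fun (black_vtx n - {(2 * int n, 2 * int n - 2 * int j - 1)})
              (white_vtx n - {(2 * int n - 2 * int i - 1, 2 * int n)}) (wt_diag n a q)"

definition G_diag_NE :: "nat \<Rightarrow> complex \<Rightarrow> complex \<Rightarrow> real \<Rightarrow> real \<Rightarrow> complex" where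
  "G_diag_NE n w b a q =
     (\<Sum>i<n. \<Sum>j<n. complex_of_real (Z_diag_rm i j a q n / Z_diag n a q) * w ^ i * b ^ j)"

end

theory Submission
  imports Defs
begin

definition Fb :: "vtx \<Rightarrow> int" where
  "Fb x = (let t = (snd x - fst x + 1) div 2 in if t > 0 then t^2 else t)"
definition Gw :: "vtx \<Rightarrow> int" where
  "Gw y = (let s = (fst y - 1 - snd y) div 2 in if s > 0 then s else -(s^2))"

lemma gauge:
  assumes x: "x \<in> black_vtx n" and ad: "adj x y" and q: "q > 0"
  shows "wt_col n a q x y = q powi (Fb x + Gw y) * wt_diag n a q x y"
proof -
  obtain x1 x2 where xx: "x = (x1, x2)" by fastforce
  from x have "even x1" "odd x2" unfolding xx black_vtx_def by auto
  then obtain u v :: int where uv: "x1 = 2 * u" "x2 = 2 * v + 1" by (metis evenE oddE)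
  have ne: "vadd x e1 \<noteq> vsub x e1" "vadd x e1 \<noteq> vadd x e2" "vadd x e1 \<noteq> vsub x e2"
     "vsub x e1 \<noteq> vadd x e2" "vsub x e1 \<noteq> vsub x e2" "vadd x e2 \<noteq> vsub x e2"
    by (auto simp: vadd_def vsub_def e1_def e2_def)
  define t where "t = v - u + 1"
  have Fx: "Fb x = (if t > 0 then t^2 else t)"
    unfolding Fb_def xx uv t_def by (simp add: Let_def)
  from ad consider "y = vadd x e1" | "y = vsub x e1" | "y = vadd x e2" | "y = vsub x e2"
    unfolding adj_def by blast
  then show ?thesis
  proof cases
    case 1
    have "Gw y = (if -t > 0 then -t else -(t^2))"
      unfolding Gw_def 1 xx uv t_def by (simp add: Let_def vadd_def e1_def power2_eq_square algebra_simps)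
    then have "Fb x + Gw y = 0" using Fx by auto
    then show ?thesis using 1 ne by (simp add: wt_col_def wt_diag_def)
  next
    case 2
    have "Gw y = (if -t > 0 then -t else -(t^2))"
      unfolding Gw_def 2 xx uv t_def by (simp add: Let_def vsub_def e1_def power2_eq_square algebra_simps)
    then have "Fb x + Gw y = 0" using Fx by auto
    then show ?thesis using 2 ne by (simp add: wt_col_def wt_diag_def)
  next
    case 3
    have G: "Gw y = (if -t-1 > 0 then -t-1 else -((t+1)^2))"
      unfolding Gw_def 3 xx uv t_def by (simp add: Let_def vadd_def e2_def power2_eq_square algebra_simps)
    have E: "- 2 * int n + x1 - 1 = Fb x + Gw y + (- 2 * min ((2 * int n - x1) div 2) ((2 * int n - 1 - x2) div 2))"
    proof -
      have m: "min ((2 * int n - x1) div 2) ((2 * int n - 1 - x2) div 2) = min (int n - u) (int n - 1 - v)"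
        unfolding uv by simp
      have vt: "v = u + t - 1" unfolding t_def by simp
      show ?thesis unfolding m using G Fx unfolding uv vt
        by (cases "t > 0"; cases "t = 0"; cases "t = -1") (auto simp: power2_eq_square algebra_simps)
    qed
    have "wt_col n a q x y = a * q powi (Fb x + Gw y + (- 2 * min ((2 * int n - x1) div 2) ((2 * int n - 1 - x2) div 2)))"
      using 3 ne E by (simp add: wt_col_def xx)
    also have "\<dots> = q powi (Fb x + Gw y) * wt_diag n a q x y"
      using 3 ne q by (subst power_int_add) (auto simp: wt_diag_def xx Let_def)
    finally show ?thesis .
  next
    case 4
    have G: "Gw y = (if -t+1 > 0 then -t+1 else -((t-1)^2))"
      unfolding Gw_def 4 xx uv t_def by (simp add: Let_def vsub_def e2_def power2_eq_square algebra_simps)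
    have E: "2 * int n - x1 = Fb x + Gw y + (2 * min ((2 * int n - 2 - x1) div 2) ((2 * int n - 1 - x2) div 2) + 1)"
    proof -
      have m: "min ((2 * int n - 2 - x1) div 2) ((2 * int n - 1 - x2) div 2) = min (int n - 1 - u) (int n - 1 - v)"
        unfolding uv by simp
      have vt: "v = u + t - 1" unfolding t_def by simp
      show ?thesis unfolding m using G Fx unfolding uv vt
        by (cases "t > 1"; cases "t = 1"; cases "t > 0") (auto simp: power2_eq_square algebra_simps)
    qed
    have "wt_col n a q x y = a * q powi (Fb x + Gw y + (2 * min ((2 * int n - 2 - x1) div 2) ((2 * int n - 1 - x2) div 2) + 1))"
      using 4 ne E by (simp add: wt_col_def xx)
    also have "\<dots> = q powi (Fb x + Gw y) * wt_diag n a q x y"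
      using 4 ne q by (subst power_int_add) (auto simp: wt_diag_def xx Let_def)
    finally show ?thesis .
  qed
qed

lemma finite_black: "finite (black_vtx n)"
proof -
  have "black_vtx n \<subseteq> {0..2 * int n} \<times> {1..2 * int n - 1}"
    unfolding black_vtx_def by auto
  then show ?thesis by (rule finite_subset) auto
qed

lemma finite_white: "finite (white_vtx n)"
proof -
  have "white_vtx n \<subseteq> {1..2 * int n - 1} \<times> {0..2 * int n}"
    unfolding white_vtx_def by auto
  then show ?thesis by (rule finite_subset) auto
qed

lemma prod_fst_match:
  assumes "M \<in> perfect_matchings Bv Wv"
  shows "(\<Prod>p\<in>M. f (fst p)) = (\<Prod>x\<in>Bv. (f x :: real))"
proof -
  have "bij_betw fst M Bv"
    unfolding bij_betw_def
  proof
    show "inj_on fst M"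
    proof (rule inj_onI)
      fix p1 p2 assume p: "p1 \<in> M" "p2 \<in> M" "fst p1 = fst p2"
      obtain x1 y1 where p1: "p1 = (x1, y1)" by (rule prod.exhaust)
      obtain x2 y2 where p2: "p2 = (x2, y2)" by (rule prod.exhaust)
      have sub: "M \<subseteq> Bv \<times> Wv" and u: "\<forall>x\<in>Bv. \<exists>!y. (x, y) \<in> M"
        using assms unfolding perfect_matchings_def by auto
      have "x1 \<in> Bv" using sub p p1 by auto
      then have "\<exists>!y. (x1, y) \<in> M" using u by blast
      then show "p1 = p2" using p p1 p2 by auto
    qed
    show "fst ` M = Bv"
    proof
      show "fst ` M \<subseteq> Bv" using assms unfolding perfect_matchings_def by auto
      show "Bv \<subseteq> fst ` M"
      proof
        fix x assume "x \<in> Bv"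
        then obtain y where "(x, y) \<in> M" using assms unfolding perfect_matchings_def by blast
        then show "x \<in> fst ` M" by force
      qed
    qed
  qed
  then show ?thesis by (rule prod.reindex_bij_betw)
qed

lemma prod_snd_match:
  assumes "M \<in> perfect_matchings Bv Wv"
  shows "(\<Prod>p\<in>M. g (snd p)) = (\<Prod>y\<in>Wv. (g y :: real))"
proof -
  have "bij_betw snd M Wv"
    unfolding bij_betw_def
  proof
    show "inj_on snd M"
    proof (rule inj_onI)
      fix p1 p2 assume p: "p1 \<in> M" "p2 \<in> M" "snd p1 = snd p2"
      obtain x1 y1 where p1: "p1 = (x1, y1)" by (rule prod.exhaust)
      obtain x2 y2 where p2: "p2 = (x2, y2)" by (rule prod.exhaust)
      have sub: "M \<subseteq> Bv \<times> Wv" and u: "\<forall>y\<in>Wv. \<exists>!x. (x, y) \<in> M"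
        using assms unfolding perfect_matchings_def by auto
      have "y1 \<in> Wv" using sub p p1 by auto
      then have "\<exists>!x. (x, y1) \<in> M" using u by blast
      then show "p1 = p2" using p p1 p2 by auto
    qed
    show "snd ` M = Wv"
    proof
      show "snd ` M \<subseteq> Wv" using assms unfolding perfect_matchings_def by auto
      show "Wv \<subseteq> snd ` M"
      proof
        fix y assume "y \<in> Wv"
        then obtain x where "(x, y) \<in> M" using assms unfolding perfect_matchings_def by blast
        then show "y \<in> snd ` M" by force
      qed
    qed
  qed
  then show ?thesis by (rule prod.reindex_bij_betw)
qed

lemma part_fun_gauge:
  assumes "finite Bv" "finite Wv"
    and h: "\<And>x y. x \<in> Bv \<Longrightarrow> adj x y \<Longrightarrow> wc x y = f x * g y * wd x y"
  shows "part_fun Bv Wv wc = (\<Prod>x\<in>Bv. f x) * (\<Prod>y\<in>Wv. g y) * part_fun Bv Wv wd"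
  unfolding part_fun_def sum_distrib_left
proof (rule sum.cong[OF refl])
  fix M assume M: "M \<in> perfect_matchings Bv Wv"
  have "(\<Prod>(x, y)\<in>M. wc x y) = (\<Prod>p\<in>M. f (fst p) * g (snd p) * wd (fst p) (snd p))"
  proof (rule prod.cong[OF refl])
    fix p assume pM: "p \<in> M"
    obtain x y where p: "p = (x, y)" by (rule prod.exhaust)
    have "x \<in> Bv" "adj x y" using M pM p unfolding perfect_matchings_def by auto
    then show "(case p of (x, y) \<Rightarrow> wc x y) = f (fst p) * g (snd p) * wd (fst p) (snd p)"
      using h p by simp
  qed
  also have "\<dots> = (\<Prod>p\<in>M. f (fst p)) * (\<Prod>p\<in>M. g (snd p)) * (\<Prod>p\<in>M. wd (fst p) (snd p))"
    by (simp add: prod.distrib)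
  also have "\<dots> = (\<Prod>x\<in>Bv. f x) * (\<Prod>y\<in>Wv. g y) * (\<Prod>(x, y)\<in>M. wd x y)"
    using prod_fst_match[OF M] prod_snd_match[OF M] by (simp add: case_prod_beta)
  finally show "(\<Prod>(x, y)\<in>M. wc x y) = (\<Prod>x\<in>Bv. f x) * (\<Prod>y\<in>Wv. g y) * (\<Prod>(x, y)\<in>M. wd x y)" .
qed


lemma ratio:
  assumes "i < n" "j < n" "q > 0"
  shows "Z_col_rm i j a q n / Z_col n a q = q ^ ((i + 1)^2 + j) * (Z_diag_rm i j a q n / Z_diag n a q)"
proof -
  define B where "B = black_vtx n"
  define W where "W = white_vtx n"
  define xb where "xb = (2 * int n, 2 * int n - 1 - 2 * int j)"
  define yw where "yw = (2 * int n - 2 * int i - 1, 2 * int n)"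
  define f where "f x = q powi Fb x" for x
  define g where "g y = q powi Gw y" for y
  have fB: "finite B" "finite W" unfolding B_def W_def by (auto simp: finite_black finite_white)
  have xbB: "xb \<in> B" using assms unfolding xb_def B_def black_vtx_def by auto
  have ywW: "yw \<in> W" using assms unfolding yw_def W_def white_vtx_def by auto
  have h: "\<And>x y. x \<in> B \<Longrightarrow> adj x y \<Longrightarrow> wt_col n a q x y = f x * g y * wt_diag n a q x y"
    unfolding f_def g_def B_def using gauge assms(3) by (simp add: power_int_add)
  have h': "\<And>x y. x \<in> B - {xb} \<Longrightarrow> adj x y \<Longrightarrow> wt_col n a q x y = f x * g y * wt_diag n a q x y"
    using h by blast
  define PB where "PB = (\<Prod>x\<in>B - {xb}. f x)"
  define PW where "PW = (\<Prod>y\<in>W - {yw}. g y)"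
  have Zc: "Z_col n a q = (f xb * PB) * (g yw * PW) * Z_diag n a q"
    unfolding Z_col_def Z_diag_def PB_def PW_def
    using part_fun_gauge[OF fB h[unfolded B_def W_def]] prod.remove[OF fB(1) xbB, of f]
      prod.remove[OF fB(2) ywW, of g] by (simp add: B_def W_def)
  have Zcr: "Z_col_rm i j a q n = PB * PW * Z_diag_rm i j a q n"
    unfolding Z_col_rm_def Z_diag_rm_def PB_def PW_def
    using part_fun_gauge[of "B - {xb}" "W - {yw}", OF _ _ h'] fB
    by (simp add: B_def W_def xb_def yw_def algebra_simps)
  have PB0: "PB \<noteq> 0" "PW \<noteq> 0" unfolding PB_def PW_def f_def g_def using assms(3)
    by (auto simp: prod_zero_iff fB)
  have d: "(snd xb - fst xb + 1) div 2 = - int j" unfolding xb_def by simp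
  have Fxb: "Fb xb = - int j" unfolding Fb_def d by (simp add: Let_def)
  have Gyw: "Gw yw = - ((int i + 1)^2)"
  proof -
    have s: "(fst yw - 1 - snd yw) div 2 = - (int i + 1)" unfolding yw_def by simp
    show ?thesis unfolding Gw_def Let_def s by (simp add: power2_eq_square algebra_simps)
  qed
  have fg: "f xb * g yw = inverse (q ^ ((i + 1)^2 + j))"
  proof -
    have e: "(int i + 1)^2 = int ((i+1)^2)" by simp
    show ?thesis unfolding f_def g_def Fxb Gyw e power_int_minus power_int_of_nat
      by (simp add: power_add)
  qed
  define Q where "Q = q ^ ((i + 1)^2 + j)"
  have Q0: "Q \<noteq> 0" unfolding Q_def using assms(3) by simp
  have "PB * PW * Z_diag_rm i j a q n / (f xb * PB * (g yw * PW) * Z_diag n a q)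
      = Z_diag_rm i j a q n / ((f xb * g yw) * Z_diag n a q)"
    using PB0 by (simp add: field_simps)
  also have "\<dots> = Q * (Z_diag_rm i j a q n / Z_diag n a q)"
    unfolding fg Q_def[symmetric] using Q0 by (simp add: field_simps)
  finally show ?thesis unfolding Zcr Zc Q_def .
qed


lemma deriv_const_pow: "(deriv ^^ Suc p) (\<lambda>_. c) = (\<lambda>_. (0::complex))"
  by (induction p) auto

lemma mono_int:
  assumes r: "r > 0"
  shows "((\<lambda>w::complex. w^k / w^(Suc m)) has_contour_integral (if k = m then 2*pi*\<i> else 0))
           (circlepath 0 r)"
proof (cases "m < k")
  case True
  define p where "p = k - Suc m"
  have k: "k = m + Suc p" using True unfolding p_def by simp
  have "((\<lambda>u. u ^ Suc p / (u - 0) ^ Suc 0) has_contour_integral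
          ((2 * pi * \<i>) / (fact 0) * (deriv ^^ 0) (\<lambda>u. u ^ Suc p) 0)) (circlepath 0 r)"
    by (rule Cauchy_has_contour_integral_higher_derivative_circlepath)
       (use r in \<open>auto intro!: holomorphic_intros continuous_intros\<close>)
  then have "((\<lambda>u. u ^ Suc p / (u - 0) ^ Suc 0) has_contour_integral 0) (circlepath 0 r)"
    by simp
  then have "((\<lambda>w::complex. w^k / w^(Suc m)) has_contour_integral 0) (circlepath 0 r)"
  proof (rule has_contour_integral_eq)
    fix w :: complex assume "w \<in> path_image (circlepath 0 r)"
    then have "w \<noteq> 0" using r by auto
    then show "w ^ Suc p / (w - 0) ^ Suc 0 = w ^ k / w ^ Suc m"
      unfolding k by (simp add: power_add field_simps)
  qed
  then show ?thesis using True by simp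
next
  case False
  define p where "p = m - k"
  have m: "m = k + p" using False unfolding p_def by simp
  have "((\<lambda>u. (\<lambda>_. 1) u / (u - 0) ^ Suc p) has_contour_integral
          ((2 * pi * \<i>) / (fact p) * (deriv ^^ p) (\<lambda>_. 1) 0)) (circlepath 0 r)"
    by (rule Cauchy_has_contour_integral_higher_derivative_circlepath)
       (use r in \<open>auto intro!: holomorphic_intros continuous_intros\<close>)
  moreover have "(2 * pi * \<i>) / (fact p) * (deriv ^^ p) (\<lambda>_. 1) 0 = (if k = m then 2*pi*\<i> else 0)"
  proof (cases p)
    case 0 then show ?thesis using m by simp
  next
    case (Suc p') then show ?thesis using m by (simp only: deriv_const_pow) simp
  qed
  ultimately have "((\<lambda>u. 1 / (u - 0) ^ Suc p) has_contour_integral (if k = m then 2*pi*\<i> else 0)) (circlepath 0 r)"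
    by simp
  then show ?thesis
  proof (rule has_contour_integral_eq)
    fix w :: complex assume "w \<in> path_image (circlepath 0 r)"
    then have "w \<noteq> 0" using r by auto
    then show "1 / (w - 0) ^ Suc p = w ^ k / w ^ Suc m"
      unfolding m by (simp add: power_add field_simps)
  qed
qed


lemma coeff_extract:
  assumes r: "r > 0" and i: "i < n"
  shows "((\<lambda>w::complex. \<Sum>i'<n. \<Sum>j'<n. A i' j' * (w^i' / w^(Suc i))) has_contour_integral
           (\<Sum>j'<n. A i j' * (2*pi*\<i>))) (circlepath 0 r)"
proof -
  have "((\<lambda>w::complex. \<Sum>i'<n. \<Sum>j'<n. A i' j' * (w^i' / w^(Suc i))) has_contour_integral
           (\<Sum>i'<n. \<Sum>j'<n. A i' j' * (if i' = i then 2*pi*\<i> else 0))) (circlepath 0 r)"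
    by (intro has_contour_integral_sum finite_lessThan has_contour_integral_lmul mono_int r)
  moreover have "(\<Sum>i'<n. \<Sum>j'<n. A i' j' * (if i' = i then 2*pi*\<i> else 0))
      = (\<Sum>i'<n. if i' = i then (\<Sum>j'<n. A i j' * (2*pi*\<i>)) else 0)"
    by (rule sum.cong) auto
  moreover have "\<dots> = (\<Sum>j'<n. A i j' * (2*pi*\<i>))"
    using i by (simp add: sum.delta')
  ultimately show ?thesis by simp
qed

lemma coeff_extract1:
  assumes r: "r > 0" and j: "j < n"
  shows "((\<lambda>b::complex. \<Sum>j'<n. B j' * (b^j' / b^(Suc j))) has_contour_integral
           (B j * (2*pi*\<i>))) (circlepath 0 r)"
proof -
  have "((\<lambda>b::complex. \<Sum>j'<n. B j' * (b^j' / b^(Suc j))) has_contour_integral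
           (\<Sum>j'<n. B j' * (if j' = j then 2*pi*\<i> else 0))) (circlepath 0 r)"
    by (intro has_contour_integral_sum finite_lessThan has_contour_integral_lmul mono_int r)
  moreover have "(\<Sum>j'<n. B j' * (if j' = j then 2*pi*\<i> else 0))
      = (\<Sum>j'<n. if j' = j then B j * (2*pi*\<i>) else 0)"
    by (rule sum.cong) auto
  moreover have "\<dots> = B j * (2*pi*\<i>)"
    using j by (simp add: sum.delta')
  ultimately show ?thesis by simp
qed

theorem lemma5p4:
  fixes n i j :: nat and a q r1 r2 :: real
  assumes "i < n" and "j < n" and "a > 0" and "q > 0" and "r1 > 0" and "r2 > 0"
  shows "complex_of_real (Z_col_rm i j a q n / Z_col n a q) =
    1 / (2 * pi * \<i>) ^ 2 *
      contour_integral (circlepath 0 r2) (\<lambda>b.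
        contour_integral (circlepath 0 r1) (\<lambda>w.
          complex_of_real (q ^ ((i + 1)^2 + j)) * G_diag_NE n w b a q / (w ^ i * b ^ j)
            / w / b))"
proof -
  define K where "K = complex_of_real (q ^ ((i + 1)^2 + j))"
  define c where "c i' j' = complex_of_real (Z_diag_rm i' j' a q n / Z_diag n a q)" for i' j'
  have pt: "K * G_diag_NE n w b a q / (w ^ i * b ^ j) / w / b
      = (\<Sum>i'<n. \<Sum>j'<n. (K * c i' j' * (b^j' / b^(Suc j))) * (w^i' / w^(Suc i)))"
    if "w \<noteq> 0" "b \<noteq> 0" for w b
  proof -
    have "K * G_diag_NE n w b a q / (w ^ i * b ^ j) / w / b
       = (\<Sum>i'<n. \<Sum>j'<n. K * (c i' j' * w ^ i' * b ^ j') / (w ^ i * b ^ j) / w / b)"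
      unfolding G_diag_NE_def c_def by (simp add: sum_distrib_left sum_divide_distrib)
    also have "\<dots> = (\<Sum>i'<n. \<Sum>j'<n. (K * c i' j' * (b^j' / b^(Suc j))) * (w^i' / w^(Suc i)))"
      using that by (intro sum.cong refl) (simp add: field_simps)
    finally show ?thesis .
  qed
  have inner: "contour_integral (circlepath 0 r1) (\<lambda>w. K * G_diag_NE n w b a q / (w ^ i * b ^ j) / w / b)
      = (\<Sum>j'<n. (2*pi*\<i> * K * c i j') * (b^j' / b^(Suc j)))" if b: "b \<noteq> 0" for b
  proof -
    have "((\<lambda>w. K * G_diag_NE n w b a q / (w ^ i * b ^ j) / w / b) has_contour_integral
          (\<Sum>j'<n. (K * c i j' * (b^j' / b^(Suc j))) * (2*pi*\<i>))) (circlepath 0 r1)"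
    proof (rule has_contour_integral_eq[OF coeff_extract[OF assms(5) assms(1)]])
      fix w assume "w \<in> path_image (circlepath 0 r1)"
      then have "w \<noteq> 0" using assms(5) by auto
      then show "(\<Sum>i'<n. \<Sum>j'<n. (K * c i' j' * (b^j' / b^(Suc j))) * (w^i' / w^(Suc i)))
          = K * G_diag_NE n w b a q / (w ^ i * b ^ j) / w / b"
        using pt b by simp
    qed
    then show ?thesis
      by (subst contour_integral_unique) (auto intro!: sum.cong simp: algebra_simps)
  qed
  have outer: "((\<lambda>b. contour_integral (circlepath 0 r1) (\<lambda>w. K * G_diag_NE n w b a q / (w ^ i * b ^ j) / w / b))
      has_contour_integral ((2*pi*\<i> * K * c i j) * (2*pi*\<i>))) (circlepath 0 r2)"
  proof (rule has_contour_integral_eq[OF coeff_extract1[OF assms(6) assms(2)]])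
    fix b assume "b \<in> path_image (circlepath 0 r2)"
    then have "b \<noteq> 0" using assms(6) by auto
    then show "(\<Sum>j'<n. (2*pi*\<i> * K * c i j') * (b^j' / b^(Suc j)))
       = contour_integral (circlepath 0 r1) (\<lambda>w. K * G_diag_NE n w b a q / (w ^ i * b ^ j) / w / b)"
      using inner by simp
  qed
  have "1 / (2 * pi * \<i>) ^ 2 * ((2*pi*\<i> * K * c i j) * (2*pi*\<i>)) = K * c i j"
    by (simp add: power2_eq_square field_simps)
  also have "\<dots> = complex_of_real (Z_col_rm i j a q n / Z_col n a q)"
    unfolding K_def c_def ratio[OF assms(1,2,4)] by simp
  finally show ?thesis
    using contour_integral_unique[OF outer] unfolding K_def by simp
qed

end
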